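(* Let $I=[x,x+y]\subset[0,\infty)$ with $y>0$, let $k\in\mathbb{N}$, $l\in\mathbb{Z}$, let $f\in W^{1,1}(I)$ be non-negative and let $z\geq 1$. Define \[ S_k(z) = \sum_{\substack{n\leq z\\ \gcd(n,k)=1}} \frac{\mu(n)^2}{\varphi(n)}, \qquad H_k(z) = \sum_{\substack{n\leq z\\ \gcd(n,k)=1}} \mu(n)^2 \frac{\sigma(n)}{\varphi(n)}. \] Then \[ \sum_{\substack{n\in I\cap(l+k\mathbb{Z})\\ \gcd(n,P(z,k))=1}} f(n) \leq \frac{\|f\|_{1,I}}{k\,S_k(z)} + \bigl(\|f\|_{\infty,I} + \|f'\|_{1,I}\bigr) \frac{H_k(z)^2}{S_k(z)^2}. \]
   Context: $W^{1,1}(I)$ denotes the closure of $C^1(I)$ with respect to the norm $\|f\|_{1,I}+\|f'\|_{1,I}$, where $\|g\|_{1,I}=\int_I|g(t)|\,dt$; it is regarded as a subspace of $C^0(I)$. $\|f\|_{\infty,I}=\sup_{t\in I}|f(t)|$. $P(z,k)=\prod_{p\le z,\ p\nmid k}p$ (product over primes). $\mu$ is the Möbius function, $\varphi$ Euler's totient function, $\sigma$ the sum-of-divisors function. *)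

theory Defs
  imports "HOL-Analysis.Analysis" "HOL-Number_Theory.Number_Theory" "HOL-Computational_Algebra.Squarefree"
begin

definition moebius_mu :: "nat \<Rightarrow> int" where
  "moebius_mu n = (if squarefree n then (-1) ^ card (prime_factors n) else 0)"

definition divisor_sigma :: "nat \<Rightarrow> nat" where
  "divisor_sigma n = (\<Sum>d\<in>{d. d dvd n}. d)"

definition Pzk :: "real \<Rightarrow> nat \<Rightarrow> nat" where
  "Pzk z k = (\<Prod>p\<in>{p::nat. prime p \<and> real p \<le> z \<and> \<not> p dvd k}. p)"

definition S_k :: "nat \<Rightarrow> real \<Rightarrow> real" where
  "S_k k z = (\<Sum>n\<in>{n::nat. 1 \<le> n \<and> real n \<le> z \<and> coprime n k}.
                 real_of_int (moebius_mu n) ^ 2 / real (totient n))"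

definition H_k :: "nat \<Rightarrow> real \<Rightarrow> real" where
  "H_k k z = (\<Sum>n\<in>{n::nat. 1 \<le> n \<and> real n \<le> z \<and> coprime n k}.
                 real_of_int (moebius_mu n) ^ 2 * real (divisor_sigma n) / real (totient n))"

definition C1_on :: "real set \<Rightarrow> (real \<Rightarrow> real) \<Rightarrow> (real \<Rightarrow> real) \<Rightarrow> bool" where
  "C1_on I u u' \<longleftrightarrow> (\<forall>t\<in>I. (u has_real_derivative u' t) (at t within I)) \<and> continuous_on I u'"

definition L1_norm :: "real set \<Rightarrow> (real \<Rightarrow> real) \<Rightarrow> real" where
  "L1_norm I g = integral I (\<lambda>t. \<bar>g t\<bar>)"

definition sup_norm :: "real set \<Rightarrow> (real \<Rightarrow> real) \<Rightarrow> real" where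
  "sup_norm I g = (SUP t\<in>I. \<bar>g t\<bar>)"

text \<open>W^{1,1}(I) as the closure of C^1(I) w.r.t. the norm L1(f)+L1(f'), viewed inside C^0(I):
  f is continuous on I, f' is its (generalised) derivative, an L^1 function on I, and
  there are C^1 functions u_n with L1(u_n - f) + L1(u_n' - f') \<rightarrow> 0.\<close>
definition W11 :: "real set \<Rightarrow> (real \<Rightarrow> real) \<Rightarrow> (real \<Rightarrow> real) \<Rightarrow> bool" where
  "W11 I f f' \<longleftrightarrow> continuous_on I f \<and> f' absolutely_integrable_on I \<and>
     (\<exists>u u'. (\<forall>m. C1_on I (u m) (u' m)) \<and>
        (\<lambda>m. L1_norm I (\<lambda>t. u m t - f t) + L1_norm I (\<lambda>t. u' m t - f' t)) \<longlonglongrightarrow> 0)"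

end

theory Submission
  imports Defs
begin

lemma C1_on_subset: "C1_on I u u' \<Longrightarrow> J \<subseteq> I \<Longrightarrow> C1_on J u u'"
  unfolding C1_on_def by (meson DERIV_subset continuous_on_subset subsetD)

lemma C1_on_cont: "C1_on I u u' \<Longrightarrow> continuous_on I u"
  unfolding C1_on_def by (meson DERIV_continuous_on)

lemma C1_on_diff: "C1_on I u u' \<Longrightarrow> C1_on I v v' \<Longrightarrow> C1_on I (\<lambda>t. u t - v t) (\<lambda>t. u' t - v' t)"
  unfolding C1_on_def by (auto intro!: derivative_eq_intros continuous_on_diff)

lemma C1_ftc:
  assumes "C1_on {c..d} u u'" "c \<le> a" "a \<le> b" "b \<le> d"
  shows "\<bar>u b - u a\<bar> \<le> integral {c..d} (\<lambda>t. \<bar>u' t\<bar>)"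
proof -
  have C: "C1_on {a..b} u u'" using assms C1_on_subset by (metis atLeastatMost_subset_iff)
  have "(u' has_integral (u b - u a)) {a..b}"
    apply (rule fundamental_theorem_of_calculus[OF assms(3)])
    using C unfolding C1_on_def has_real_derivative_iff_has_vector_derivative by auto
  hence "u b - u a = integral {a..b} u'" by (simp add: integral_unique)
  moreover have cu': "continuous_on {c..d} u'" using assms(1) C1_on_def by auto
  have "\<bar>integral {a..b} u'\<bar> \<le> integral {a..b} (\<lambda>t. \<bar>u' t\<bar>)"
    using integral_norm_bound_integral[of u' "{a..b}" "\<lambda>t. \<bar>u' t\<bar>"] C
    by (auto simp: C1_on_def intro!: integrable_continuous_interval continuous_intros)
  moreover have "integral {a..b} (\<lambda>t. \<bar>u' t\<bar>) \<le> integral {c..d} (\<lambda>t. \<bar>u' t\<bar>)"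
    apply (rule integral_subset_le)
    using assms cu' C by (auto simp: C1_on_def intro!: integrable_continuous_interval continuous_intros)
  ultimately show ?thesis by linarith
qed

lemma tile:
  fixes u u' :: "real \<Rightarrow> real"
  assumes "C1_on {c..d} u u'" "c \<le> p" "p \<le> d" "d - c \<le> q" "0 < q"
    and M: "\<forall>t\<in>{c..d}. \<bar>u t\<bar> \<le> M"
  shows "\<bar>u p - integral {c..d} u / q\<bar> \<le> integral {c..d} (\<lambda>t. \<bar>u' t\<bar>) + (1 - (d - c) / q) * M"
proof -
  define V where "V = integral {c..d} (\<lambda>t. \<bar>u' t\<bar>)"
  have cu: "continuous_on {c..d} u" using assms(1) C1_on_cont by auto
  have cd: "c \<le> d" using assms by auto
  have pt: "\<bar>u p - u t\<bar> \<le> V" if "t \<in> {c..d}" for t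
  proof (cases "t \<le> p")
    case True then show ?thesis using C1_ftc[OF assms(1), of t p] that assms unfolding V_def by auto
  next
    case False then show ?thesis using C1_ftc[OF assms(1), of p t] that assms unfolding V_def by auto
  qed
  have iu: "u integrable_on {c..d}" by (rule integrable_continuous_interval[OF cu])
  have i1: "integral {c..d} (\<lambda>t. u p - u t) = (d - c) * u p - integral {c..d} u"
    using cd iu by (subst integral_diff) auto
  have "norm (integral {c..d} (\<lambda>t. u p - u t)) \<le> integral {c..d} (\<lambda>t. V)"
    apply (rule integral_norm_bound_integral)
    using iu pt by (auto intro!: integrable_diff)
  hence i2: "\<bar>integral {c..d} (\<lambda>t. u p - u t)\<bar> \<le> integral {c..d} (\<lambda>t. V)" by simp
  have i3: "integral {c..d} (\<lambda>t. V) = (d - c) * V" using cd by simp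
  have eq: "u p - integral {c..d} u / q = integral {c..d} (\<lambda>t. u p - u t) / q + (1 - (d - c)/q) * u p"
    using i1 assms(5) by (simp add: field_simps)
  have V0: "0 \<le> V" unfolding V_def by (rule integral_nonneg) (use assms(1) in \<open>auto simp: C1_on_def intro!: integrable_continuous_interval continuous_intros\<close>)
  have "\<bar>integral {c..d} (\<lambda>t. u p - u t) / q\<bar> \<le> (d - c) * V / q"
    using i2 i3 assms(5) cd by (simp add: divide_right_mono)
  also have "\<dots> \<le> V" using assms(4,5) V0 cd by (simp add: divide_le_eq mult_left_mono mult.commute)
  finally have a: "\<bar>integral {c..d} (\<lambda>t. u p - u t) / q\<bar> \<le> V" .
  have b: "\<bar>(1 - (d - c)/q) * u p\<bar> \<le> (1 - (d - c)/q) * M"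
  proof -
    have "0 \<le> 1 - (d - c)/q" using assms(4,5) by (simp add: divide_le_eq)
    moreover have "\<bar>u p\<bar> \<le> M" using M assms by auto
    ultimately show ?thesis by (simp add: abs_mult mult_left_mono)
  qed
  show ?thesis unfolding eq using a b unfolding V_def by linarith
qed

lemma cong_close_eq:
  fixes n m q :: int
  assumes "[n = m] (mod q)" "\<bar>real_of_int n - real_of_int m\<bar> < real_of_int q"
  shows "n = m"
proof (rule ccontr)
  assume "n \<noteq> m"
  have "q dvd (n - m)" using assms(1) by (metis cong_iff_dvd_diff)
  hence "\<bar>q\<bar> \<le> \<bar>n - m\<bar>" using \<open>n \<noteq> m\<close> by (intro dvd_imp_le_int) auto
  hence "real_of_int \<bar>q\<bar> \<le> \<bar>real_of_int n - real_of_int m\<bar>" by linarith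
  thus False using assms(2) by linarith
qed

definition APset :: "real \<Rightarrow> real \<Rightarrow> int \<Rightarrow> int \<Rightarrow> int set" where
  "APset s e a q = {n::int. s \<le> real_of_int n \<and> real_of_int n \<le> e \<and> [n = a] (mod q)}"

lemma APset_finite: "finite (APset s e a q)"
proof -
  have "APset s e a q \<subseteq> {\<lceil>s\<rceil>..\<lfloor>e\<rfloor>}" unfolding APset_def
    by (auto simp: ceiling_le_iff le_floor_iff)
  thus ?thesis by (rule finite_subset) simp
qed

lemma ap_C1_aux:
  fixes u u' :: "real \<Rightarrow> real" and q a :: int
  assumes "q \<ge> 1"
  shows "\<And>s. C1_on {s..e} u u' \<Longrightarrow> s \<le> e \<Longrightarrow> e - s < real N * q \<Longrightarrow> (\<forall>t\<in>{s..e}. \<bar>u t\<bar> \<le> M) \<Longrightarrow>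
    \<bar>(\<Sum>n\<in>APset s e a q. u (real_of_int n)) - integral {s..e} u / q\<bar>
      \<le> integral {s..e} (\<lambda>t. \<bar>u' t\<bar>) + M"
proof (induction N)
  case 0
  then show ?case using assms by simp
next
  case (Suc N)
  fix s assume C: "C1_on {s..e} u u'" and se: "s \<le> e" and lt: "e - s < real (Suc N) * q"
    and M: "\<forall>t\<in>{s..e}. \<bar>u t\<bar> \<le> M"
  have q0: "0 < real_of_int q" using assms by simp
  have M0: "0 \<le> M" using M se by (meson abs_ge_zero atLeastAtMost_iff order_trans order_refl)
  have V0: "0 \<le> integral {s..e} (\<lambda>t. \<bar>u' t\<bar>)"
    by (rule integral_nonneg) (use C in \<open>auto simp: C1_on_def intro!: integrable_continuous_interval continuous_intros\<close>)
  show "\<bar>(\<Sum>n\<in>APset s e a q. u (real_of_int n)) - integral {s..e} u / q\<bar>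
      \<le> integral {s..e} (\<lambda>t. \<bar>u' t\<bar>) + M"
  proof (cases "e - s < q")
    case True
    show ?thesis
    proof (cases "APset s e a q = {}")
      case True
      have iu: "u integrable_on {s..e}" using C C1_on_cont integrable_continuous_interval by blast
      have "norm (integral {s..e} u) \<le> integral {s..e} (\<lambda>t. M)"
        by (rule integral_norm_bound_integral) (use iu M in auto)
      hence "\<bar>integral {s..e} u\<bar> \<le> (e - s) * M" using se by simp
      also have "\<dots> \<le> q * M" using \<open>e - s < q\<close> M0 by (simp add: mult_right_mono)
      finally have "\<bar>integral {s..e} u / q\<bar> \<le> M" using q0 by (simp add: divide_le_eq mult.commute)
      then show ?thesis using True V0 by simp
    next
      case False
      then obtain n where n: "n \<in> APset s e a q" by blast
      have "APset s e a q = {n}"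
      proof safe
        fix m assume m: "m \<in> APset s e a q"
        have "[m = n] (mod q)" using m n unfolding APset_def by (auto intro: cong_trans cong_sym)
        moreover have "\<bar>real_of_int m - real_of_int n\<bar> < real_of_int q"
          using m n \<open>e - s < q\<close> unfolding APset_def by auto
        ultimately show "m = n" by (rule cong_close_eq)
      qed (use n in auto)
      hence "(\<Sum>n\<in>APset s e a q. u (real_of_int n)) = u n" by simp
      moreover have "\<bar>u n - integral {s..e} u / q\<bar> \<le> integral {s..e} (\<lambda>t. \<bar>u' t\<bar>) + (1 - (e - s) / q) * M"
        by (rule tile) (use C n q0 M \<open>e - s < q\<close> in \<open>auto simp: APset_def\<close>)
      moreover have "(1 - (e - s) / q) * M \<le> M"
      proof -
        have "0 \<le> (e - s) / q" using se q0 by simp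
        hence "0 \<le> ((e - s) / q) * M" using M0 by (rule mult_nonneg_nonneg)
        thus ?thesis by (simp add: left_diff_distrib)
      qed
      ultimately show ?thesis by linarith
    qed
  next
    case False
    define n0 where "n0 = a + q * \<lceil>(s - a) / q\<rceil>"
    have n0a: "[n0 = a] (mod q)" unfolding n0_def by (simp add: cong_add_lcancel_0 cong_mult_self_left)
    have c1: "real_of_int \<lceil>(s - a) / q\<rceil> \<ge> (s - a) / q" by linarith
    have c2: "real_of_int \<lceil>(s - a) / q\<rceil> < (s - a) / q + 1" by linarith
    have "q * real_of_int \<lceil>(s - a) / q\<rceil> \<ge> s - a" by (metis c1 pos_divide_le_eq[OF q0] mult.commute)
    hence n0s: "s \<le> real_of_int n0" unfolding n0_def by simp
    have "real_of_int \<lceil>(s - a) / q\<rceil> - 1 < (s - a) / q" using c2 by linarith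
    hence "(real_of_int \<lceil>(s - a) / q\<rceil> - 1) * q < s - a" using pos_less_divide_eq[OF q0] by simp
    hence "q * real_of_int \<lceil>(s - a) / q\<rceil> < s - a + q" by (simp add: algebra_simps)
    hence n0q: "real_of_int n0 < s + q" unfolding n0_def by simp
    have sqe: "s + q \<le> e" using False by simp
    have split: "APset s e a q = insert n0 (APset (s + q) e a q)"
    proof safe
      fix m assume m: "m \<in> APset s e a q" "m \<notin> APset (s + q) e a q"
      hence "real_of_int m < s + q" unfolding APset_def by auto
      have "[m = n0] (mod q)" using m n0a unfolding APset_def by (auto intro: cong_trans cong_sym)
      moreover have "\<bar>real_of_int m - real_of_int n0\<bar> < real_of_int q"
        using m \<open>real_of_int m < s + q\<close> n0s n0q unfolding APset_def by auto
      ultimately show "m = n0" by (rule cong_close_eq)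
    qed (use n0a n0s n0q sqe q0 in \<open>auto simp: APset_def\<close>)
    have n0n: "n0 \<notin> APset (s + q) e a q" using n0q unfolding APset_def by auto
    have sum: "(\<Sum>n\<in>APset s e a q. u (real_of_int n)) = u n0 + (\<Sum>n\<in>APset (s+q) e a q. u (real_of_int n))"
      unfolding split using n0n APset_finite by simp
    have C1: "C1_on {s..s+q} u u'" using C1_on_subset[OF C] sqe by auto
    have C2: "C1_on {s+q..e} u u'" using C1_on_subset[OF C] q0 by auto
    have cu: "continuous_on {s..e} u" using C C1_on_cont by blast
    have cu': "continuous_on {s..e} (\<lambda>t. \<bar>u' t\<bar>)" using C unfolding C1_on_def by (auto intro: continuous_intros)
    have i1: "integral {s..s+q} u + integral {s+q..e} u = integral {s..e} u"
      using Henstock_Kurzweil_Integration.integral_combine[where a=s and c="s+q" and b=e and f=u] sqe q0 integrable_continuous_interval[OF cu] by auto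
    have i2: "integral {s..s+q} (\<lambda>t. \<bar>u' t\<bar>) + integral {s+q..e} (\<lambda>t. \<bar>u' t\<bar>) = integral {s..e} (\<lambda>t. \<bar>u' t\<bar>)"
      using Henstock_Kurzweil_Integration.integral_combine[where a=s and c="s+q" and b=e and f="\<lambda>t. \<bar>u' t\<bar>"] sqe q0 integrable_continuous_interval[OF cu'] by auto
    have T: "\<bar>u n0 - integral {s..s+q} u / q\<bar> \<le> integral {s..s+q} (\<lambda>t. \<bar>u' t\<bar>) + (1 - ((s+q) - s) / q) * M"
      by (rule tile) (use C1 n0s n0q q0 M sqe in auto)
    hence T': "\<bar>u n0 - integral {s..s+q} u / q\<bar> \<le> integral {s..s+q} (\<lambda>t. \<bar>u' t\<bar>)" using q0 by simp
    have IH: "\<bar>(\<Sum>n\<in>APset (s+q) e a q. u (real_of_int n)) - integral {s+q..e} u / q\<bar>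
      \<le> integral {s+q..e} (\<lambda>t. \<bar>u' t\<bar>) + M"
      by (rule Suc.IH) (use C2 sqe lt M q0 in \<open>auto simp: algebra_simps\<close>)
    have "integral {s..e} u / q = integral {s..s+q} u / q + integral {s+q..e} u / q"
      using i1 by (metis add_divide_distrib)
    then show ?thesis using sum T' IH i2 by linarith
  qed
qed

lemma ap_C1:
  fixes u u' :: "real \<Rightarrow> real" and q a :: int
  assumes "q \<ge> 1" "C1_on {s..e} u u'" "s \<le> e" "\<forall>t\<in>{s..e}. \<bar>u t\<bar> \<le> M"
  shows "\<bar>(\<Sum>n\<in>APset s e a q. u (real_of_int n)) - integral {s..e} u / q\<bar>
      \<le> integral {s..e} (\<lambda>t. \<bar>u' t\<bar>) + M"
proof -
  obtain N :: nat where "(e - s) / q < N" using reals_Archimedean2 by blast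
  hence "e - s < real N * q" using assms(1) by (simp add: divide_less_eq)
  thus ?thesis using ap_C1_aux[OF assms(1)] assms by blast
qed


lemma bounded_cont:
  fixes u :: "real \<Rightarrow> real"
  assumes "continuous_on {c..d} u"
  shows "\<exists>M. \<forall>t\<in>{c..d}. \<bar>u t\<bar> \<le> M"
proof -
  have "compact (u ` {c..d})" by (rule compact_continuous_image[OF assms]) simp
  hence "bounded (u ` {c..d})" by (rule compact_imp_bounded)
  then obtain B where "\<forall>x\<in>u ` {c..d}. norm x \<le> B" unfolding bounded_iff by blast
  thus ?thesis by auto
qed

lemma tile0:
  fixes h h' :: "real \<Rightarrow> real"
  assumes "C1_on {c..d} h h'" "c \<le> t" "t \<le> d" "c < d"
  shows "\<bar>h t\<bar> \<le> integral {c..d} (\<lambda>s. \<bar>h s\<bar>) / (d - c) + integral {c..d} (\<lambda>s. \<bar>h' s\<bar>)"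
proof -
  have ch: "continuous_on {c..d} h" using assms C1_on_cont by blast
  obtain M where M: "\<forall>t\<in>{c..d}. \<bar>h t\<bar> \<le> M" using bounded_cont[OF ch] by blast
  have "\<bar>h t - integral {c..d} h / (d - c)\<bar> \<le> integral {c..d} (\<lambda>s. \<bar>h' s\<bar>) + (1 - (d - c) / (d - c)) * M"
    by (rule tile) (use assms M in auto)
  hence 1: "\<bar>h t - integral {c..d} h / (d - c)\<bar> \<le> integral {c..d} (\<lambda>s. \<bar>h' s\<bar>)" using assms by simp
  have "norm (integral {c..d} h) \<le> integral {c..d} (\<lambda>s. \<bar>h s\<bar>)"
    by (rule integral_norm_bound_integral) (use ch in \<open>auto intro!: integrable_continuous_interval continuous_intros\<close>)
  hence "\<bar>integral {c..d} h / (d - c)\<bar> \<le> integral {c..d} (\<lambda>s. \<bar>h s\<bar>) / (d - c)"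
    using assms by (simp add: divide_right_mono)
  thus ?thesis using 1 by linarith
qed

lemma ap_W11:
  fixes f f' :: "real \<Rightarrow> real" and q a :: int
  assumes W: "W11 {s..e} f f'" and se: "s < e" and q: "q \<ge> 1"
  shows "\<bar>(\<Sum>n\<in>APset s e a q. f (real_of_int n)) - integral {s..e} f / q\<bar>
      \<le> sup_norm {s..e} f + L1_norm {s..e} f'"
proof -
  define I where "I = {s..e}"
  have cf: "continuous_on I f" and af': "f' absolutely_integrable_on I"
    using W unfolding W11_def I_def by auto
  obtain u u' where C: "\<And>m. C1_on I (u m) (u' m)"
    and lim: "(\<lambda>m. L1_norm I (\<lambda>t. u m t - f t) + L1_norm I (\<lambda>t. u' m t - f' t)) \<longlonglongrightarrow> 0"
    using W unfolding W11_def I_def by blast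
  define A where "A m = L1_norm I (\<lambda>t. u m t - f t)" for m
  define B where "B m = L1_norm I (\<lambda>t. u' m t - f' t)" for m
  have cu: "continuous_on I (u m)" for m using C C1_on_cont by blast
  have cu': "continuous_on I (u' m)" for m using C unfolding C1_on_def by blast
  have Iint: "continuous_on I g \<Longrightarrow> g integrable_on I" for g :: "real \<Rightarrow> real"
    unfolding I_def by (rule integrable_continuous_interval)
  have aint: "continuous_on I g \<Longrightarrow> g absolutely_integrable_on I" for g :: "real \<Rightarrow> real"
    unfolding I_def by (rule absolutely_integrable_continuous_real)
  have absint: "g absolutely_integrable_on I \<Longrightarrow> (\<lambda>t. \<bar>g t\<bar>) integrable_on I" for g :: "real \<Rightarrow> real"
    unfolding absolutely_integrable_on_def by simp
  have absint': "g absolutely_integrable_on I \<Longrightarrow> g integrable_on I" for g :: "real \<Rightarrow> real"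
    unfolding absolutely_integrable_on_def by simp
  have ad: "(\<lambda>t. u' m t - f' t) absolutely_integrable_on I" for m
    using aint[OF cu'[of m]] af' by (rule set_integral_diff(1))
  have A0: "0 \<le> A m" for m unfolding A_def L1_norm_def
    by (rule integral_nonneg) (auto intro!: Iint continuous_intros cu cf)
  have B0: "0 \<le> B m" for m unfolding B_def L1_norm_def
    by (rule integral_nonneg) (use absint[OF ad[of m]] in auto)
  have AB: "(\<lambda>m. A m + B m) \<longlonglongrightarrow> 0" using lim unfolding A_def B_def .
  have Al: "A \<longlonglongrightarrow> 0"
    by (rule tendsto_sandwich[of "\<lambda>_. 0" _ _ "\<lambda>m. A m + B m"]) (use A0 B0 AB in auto)
  have Bl: "B \<longlonglongrightarrow> 0"
    by (rule tendsto_sandwich[of "\<lambda>_. 0" _ _ "\<lambda>m. A m + B m"]) (use A0 B0 AB in auto)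
  define y where "y = e - s"
  have y0: "0 < y" using se y_def by simp
  define c where "c m = A m / y + B m" for m
  have c0: "0 \<le> c m" for m unfolding c_def using A0 B0 y0 by simp
  have cl: "c \<longlonglongrightarrow> 0" unfolding c_def using Al Bl y0 by (auto intro!: tendsto_eq_intros)
  have cauchy: "\<bar>u m t - u j t\<bar> \<le> c m + c j" if t: "t \<in> I" for m j t
  proof -
    have Cd: "C1_on {s..e} (\<lambda>t. u m t - u j t) (\<lambda>t. u' m t - u' j t)"
      using C1_on_diff[OF C[of m] C[of j]] unfolding I_def .
    have 1: "\<bar>u m t - u j t\<bar> \<le> integral I (\<lambda>t. \<bar>u m t - u j t\<bar>) / y + integral I (\<lambda>t. \<bar>u' m t - u' j t\<bar>)"
      using tile0[OF Cd] t se unfolding I_def y_def by auto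
    have 2: "integral I (\<lambda>t. \<bar>u m t - u j t\<bar>) \<le> A m + A j"
    proof -
      have "integral I (\<lambda>t. \<bar>u m t - u j t\<bar>) \<le> integral I (\<lambda>t. \<bar>u m t - f t\<bar> + \<bar>u j t - f t\<bar>)"
        by (rule integral_le) (auto intro!: Iint continuous_intros cu cf)
      also have "\<dots> = A m + A j" unfolding A_def L1_norm_def
        by (rule integral_add) (auto intro!: Iint continuous_intros cu cf)
      finally show ?thesis .
    qed
    have 3: "integral I (\<lambda>t. \<bar>u' m t - u' j t\<bar>) \<le> B m + B j"
    proof -
      have "integral I (\<lambda>t. \<bar>u' m t - u' j t\<bar>) \<le> integral I (\<lambda>t. \<bar>u' m t - f' t\<bar> + \<bar>u' j t - f' t\<bar>)"
        apply (rule integral_le)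
          apply (auto intro!: Iint continuous_intros cu')[1]
         apply (rule integrable_add[OF absint[OF ad] absint[OF ad]])
        by auto
      also have "\<dots> = B m + B j" unfolding B_def L1_norm_def
        by (rule integral_add) (auto intro!: absint ad)
      finally show ?thesis .
    qed
    have "integral I (\<lambda>t. \<bar>u m t - u j t\<bar>) / y \<le> (A m + A j) / y" using 2 y0 by (simp add: divide_right_mono)
    thus ?thesis using 1 3 unfolding c_def by (simp add: add_divide_distrib)
  qed
  have conv: "convergent (\<lambda>m. u m t)" if t: "t \<in> I" for t
  proof -
    have "Cauchy (\<lambda>m. u m t)"
    proof (rule metric_CauchyI)
      fix \<epsilon> :: real assume "0 < \<epsilon>"
      hence "\<epsilon>/2 > 0" by simp
      hence "eventually (\<lambda>m. c m < \<epsilon>/2) sequentially" using cl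
        unfolding order_tendsto_iff by blast
      then obtain N where N: "\<And>m. m \<ge> N \<Longrightarrow> c m < \<epsilon>/2" by (auto simp: eventually_sequentially)
      show "\<exists>N. \<forall>m\<ge>N. \<forall>n\<ge>N. dist (u m t) (u n t) < \<epsilon>"
      proof (intro exI allI impI)
        fix m n assume "N \<le> m" "N \<le> n"
        hence "c m + c n < \<epsilon>" using N[of m] N[of n] by simp
        thus "dist (u m t) (u n t) < \<epsilon>" using cauchy[OF t, of m n] by (simp add: dist_real_def)
      qed
    qed
    thus ?thesis by (simp add: Cauchy_convergent_iff)
  qed
  define g where "g t = lim (\<lambda>m. u m t)" for t
  have gl: "(\<lambda>m. u m t) \<longlonglongrightarrow> g t" if "t \<in> I" for t
    unfolding g_def using conv[OF that] by (simp add: convergent_LIMSEQ_iff)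
  have ug: "\<bar>u m t - g t\<bar> \<le> c m" if t: "t \<in> I" for m t
  proof -
    have "(\<lambda>j. \<bar>u m t - u j t\<bar>) \<longlonglongrightarrow> \<bar>u m t - g t\<bar>" using gl[OF t] by (auto intro!: tendsto_intros)
    moreover have "(\<lambda>j. c m + c j) \<longlonglongrightarrow> c m + 0" using cl by (intro tendsto_add tendsto_const)
    ultimately show ?thesis using cauchy[OF t] by (intro LIMSEQ_le) auto
  qed
  have cg: "continuous_on I g"
  proof (rule uniform_limit_theorem[of _ u])
    show "\<forall>\<^sub>F m in sequentially. continuous_on I (u m)" using cu by simp
    show "uniform_limit I u g sequentially"
      unfolding uniform_limit_iff
    proof safe
      fix \<epsilon> :: real assume "0 < \<epsilon>"
      hence "eventually (\<lambda>m. c m < \<epsilon>) sequentially" using cl unfolding order_tendsto_iff by blast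
      thus "\<forall>\<^sub>F m in sequentially. \<forall>t\<in>I. dist (u m t) (g t) < \<epsilon>"
      proof eventually_elim
        case (elim m)
        show ?case using ug[of _ m] elim by (force simp: dist_real_def)
      qed
    qed
  qed simp
  have gf: "g t = f t" if t: "t \<in> I" for t
  proof -
    define h where "h t = \<bar>g t - f t\<bar>" for t
    have ch: "continuous_on I h" unfolding h_def by (intro continuous_intros cg cf)
    have hle: "integral I h \<le> y * c m + A m" for m
    proof -
      have "integral I h \<le> integral I (\<lambda>t. c m + \<bar>u m t - f t\<bar>)"
        apply (rule integral_le)
        using ch apply (simp add: Iint)
         apply (fastforce intro!: Iint continuous_intros cu cf cg)
        subgoal for t using ug[of t m] unfolding h_def by linarith
        done
      also have "\<dots> = y * c m + A m"
      proof -
        have "(\<lambda>t. \<bar>u m t - f t\<bar>) integrable_on I" by (auto intro!: Iint continuous_intros cu cf)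
        hence "integral I (\<lambda>t. c m + \<bar>u m t - f t\<bar>) = integral I (\<lambda>t. c m) + A m"
          unfolding A_def L1_norm_def by (subst integral_add) (auto simp: I_def)
        thus ?thesis using se unfolding I_def y_def by simp
      qed
      finally show ?thesis .
    qed
    have lim0: "(\<lambda>m. y * c m + A m) \<longlonglongrightarrow> y * 0 + 0" using cl Al by (intro tendsto_intros)
    have "integral I h \<le> y * 0 + 0"
      by (rule LIMSEQ_le[OF tendsto_const lim0]) (use hle in blast)
    moreover have "0 \<le> integral I h" by (rule integral_nonneg) (auto simp: h_def intro!: Iint ch)
    ultimately have "integral I h = 0" by simp
    hence i0: "integral (cbox s e) h = 0" unfolding I_def by simp
    have nn: "\<And>x. x \<in> cbox s e \<Longrightarrow> h x \<ge> 0" unfolding h_def by simp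
    have bx: "box s e \<noteq> {}" using se by simp
    have ch': "continuous_on (cbox s e) h" using ch unfolding I_def by simp
    have "\<forall>x\<in>cbox s e. h x = 0" using integral_cbox_eq_0_iff[OF ch' bx nn] i0 by blast
    hence "h t = 0" using t unfolding I_def by simp
    thus ?thesis unfolding h_def by simp
  qed
  have uf: "\<bar>u m t - f t\<bar> \<le> c m" if "t \<in> I" for m t using ug[OF that] gf[OF that] by simp
  define SN where "SN = sup_norm I f"
  have bdd: "bdd_above ((\<lambda>t. \<bar>f t\<bar>) ` I)"
  proof -
    obtain M where "\<forall>t\<in>{s..e}. \<bar>f t\<bar> \<le> M" using bounded_cont cf unfolding I_def by blast
    thus ?thesis unfolding I_def by (intro bdd_aboveI2[where M=M]) auto
  qed
  have fSN: "\<bar>f t\<bar> \<le> SN" if "t \<in> I" for t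
    unfolding SN_def sup_norm_def using that bdd by (intro cSUP_upper)
  define P where "P = APset s e a q"
  have Pfin: "finite P" unfolding P_def by (rule APset_finite)
  have PI: "real_of_int n \<in> I" if "n \<in> P" for n using that unfolding P_def APset_def I_def by auto
  define E where "E = L1_norm I f'"
  define LHS where "LHS = \<bar>(\<Sum>n\<in>P. f (real_of_int n)) - integral I f / q\<bar>"
  have q0: "0 < real_of_int q" using q by simp
  have main: "LHS \<le> SN + E + (B m + c m + card P * c m + A m / q)" for m
  proof -
    have ap: "\<bar>(\<Sum>n\<in>P. u m (real_of_int n)) - integral I (u m) / q\<bar> \<le> integral I (\<lambda>t. \<bar>u' m t\<bar>) + (SN + c m)"
      unfolding P_def I_def
    proof (rule ap_C1[OF q])
      show "C1_on {s..e} (u m) (u' m)" using C[of m] unfolding I_def .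
      show "s \<le> e" using se by simp
      show "\<forall>t\<in>{s..e}. \<bar>u m t\<bar> \<le> SN + c m"
      proof
        fix t assume "t \<in> {s..e}"
        hence "t \<in> I" unfolding I_def .
        thus "\<bar>u m t\<bar> \<le> SN + c m" using fSN[of t] uf[of t m] by linarith
      qed
    qed
    have d1: "\<bar>(\<Sum>n\<in>P. f (real_of_int n)) - (\<Sum>n\<in>P. u m (real_of_int n))\<bar> \<le> card P * c m"
    proof -
      have "\<bar>(\<Sum>n\<in>P. f (real_of_int n)) - (\<Sum>n\<in>P. u m (real_of_int n))\<bar> = \<bar>\<Sum>n\<in>P. u m (real_of_int n) - f (real_of_int n)\<bar>"
      proof -
        have e: "(\<Sum>n\<in>P. f (real_of_int n)) - (\<Sum>n\<in>P. u m (real_of_int n)) = - (\<Sum>n\<in>P. u m (real_of_int n) - f (real_of_int n))"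
          by (simp add: sum_subtractf)
        show ?thesis by (simp only: e abs_minus_cancel)
      qed
      also have "\<dots> \<le> (\<Sum>n\<in>P. \<bar>u m (real_of_int n) - f (real_of_int n)\<bar>)" by (rule sum_abs)
      also have "\<dots> \<le> (\<Sum>n\<in>P. c m)"
        by (rule sum_mono) (use uf PI in blast)
      finally show ?thesis by simp
    qed
    have d2: "\<bar>integral I (u m) - integral I f\<bar> \<le> A m"
    proof -
      have "integral I (u m) - integral I f = integral I (\<lambda>t. u m t - f t)"
        using integral_diff[OF Iint[OF cu[of m]] Iint[OF cf]] by simp
      moreover have "norm (integral I (\<lambda>t. u m t - f t)) \<le> A m" unfolding A_def L1_norm_def
        by (rule integral_norm_bound_integral) (auto intro!: Iint continuous_intros cu cf)
      ultimately show ?thesis by simp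
    qed
    have d3: "integral I (\<lambda>t. \<bar>u' m t\<bar>) \<le> E + B m"
    proof -
      have "integral I (\<lambda>t. \<bar>u' m t\<bar>) \<le> integral I (\<lambda>t. \<bar>f' t\<bar> + \<bar>u' m t - f' t\<bar>)"
        apply (rule integral_le)
          apply (auto intro!: Iint continuous_intros cu')[1]
         apply (rule integrable_add[OF absint[OF af'] absint[OF ad]])
        by auto
      also have "\<dots> = E + B m" unfolding B_def E_def L1_norm_def
        by (rule integral_add) (auto intro!: absint ad af')
      finally show ?thesis .
    qed
    have d2': "\<bar>integral I (u m) / q - integral I f / q\<bar> \<le> A m / q"
    proof -
      have "\<bar>integral I (u m) / q - integral I f / q\<bar> = \<bar>integral I (u m) - integral I f\<bar> / q"
        using q0 by (simp add: diff_divide_distrib[symmetric])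
      also have "\<dots> \<le> A m / q" using d2 q0 by (intro divide_right_mono) auto
      finally show ?thesis .
    qed
    show ?thesis unfolding LHS_def using ap d1 d2' d3 by linarith
  qed
  have "(\<lambda>m. B m + c m + real (card P) * c m + A m / q) \<longlonglongrightarrow> 0 + 0 + real (card P) * 0 + 0 / q"
    by (intro tendsto_add tendsto_mult tendsto_divide tendsto_const Bl cl Al) (use q0 in simp)
  hence "(\<lambda>m. SN + E + (B m + c m + real (card P) * c m + A m / q)) \<longlonglongrightarrow> SN + E + 0"
    by (intro tendsto_add tendsto_const) simp
  hence "LHS \<le> SN + E + 0" by (rule LIMSEQ_le[OF tendsto_const]) (use main in blast)
  thus ?thesis unfolding LHS_def SN_def E_def P_def I_def by simp
qed


lemma mu_1: "moebius_mu 1 = 1" unfolding moebius_mu_def by simp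

lemma mu_sq: "squarefree n \<Longrightarrow> (real_of_int (moebius_mu n))^2 = 1"
  unfolding moebius_mu_def by (simp add: power_even_eq[symmetric] power_mult_distrib[symmetric] power_mult[symmetric])

lemma mu_nsq: "\<not> squarefree n \<Longrightarrow> moebius_mu n = 0"
  unfolding moebius_mu_def by simp

lemma mu_abs1: "squarefree n \<Longrightarrow> \<bar>real_of_int (moebius_mu n)\<bar> = 1"
  unfolding moebius_mu_def by (simp add: abs_mult)

lemma mu_abs: "\<bar>real_of_int (moebius_mu n)\<bar> \<le> 1"
  unfolding moebius_mu_def by (simp add: abs_mult)

lemma mu_prime_mult:
  fixes p t :: nat
  assumes p: "prime p" and t: "squarefree t" "t > 0" and nd: "\<not> p dvd t"
  shows "moebius_mu (p * t) = - moebius_mu t"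
proof -
  have cop: "coprime p t" using p nd by (rule prime_imp_coprime)
  have sq: "squarefree (p * t)" using squarefree_mult_coprime[OF cop squarefree_prime[OF p] t(1)] .
  have pf: "prime_factors (p * t) = insert p (prime_factors t)"
    using prime_factors_product[of p t] p t by (simp add: prime_prime_factors prime_gt_0_nat)
  have "p \<notin> prime_factors t" using nd by (auto simp: in_prime_factors_iff)
  hence "card (prime_factors (p * t)) = Suc (card (prime_factors t))" unfolding pf by simp
  thus ?thesis using sq t unfolding moebius_mu_def by simp
qed

lemma divisors_prime_mult:
  fixes p m :: nat
  assumes p: "prime p" and nd: "\<not> p dvd m"
  shows "{t. t dvd p * m} = {t. t dvd m} \<union> (\<lambda>t. p * t) ` {t. t dvd m}"
proof safe
  fix t assume t: "t dvd p * m" "t \<notin> (\<lambda>t. p * t) ` {t. t dvd m}"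
  show "t dvd m"
  proof (cases "p dvd t")
    case True
    then obtain s where s: "t = p * s" by blast
    hence "s dvd m" using t(1) p by (auto simp: prime_gt_0_nat)
    thus ?thesis using t(2) s by blast
  next
    case False
    hence "coprime t p" using p by (simp add: prime_imp_coprime coprime_commute)
    thus ?thesis using t(1) by (metis coprime_dvd_mult_right_iff)
  qed
qed auto

lemma mu_sum:
  fixes m :: nat
  assumes sq: "squarefree m" and m0: "m > 0"
  shows "(\<Sum>t\<in>{t. t dvd m}. real_of_int (moebius_mu t)) = (if m = 1 then 1 else 0)"
proof (cases "m = 1")
  case True
  have "{t. t dvd m} = {1}" using True by auto
  then show ?thesis using True by (simp add: moebius_mu_def)
next
  case False
  obtain p where p: "prime p" "p dvd m" using prime_factor_nat[OF False] by blast
  then obtain m' where m': "m = p * m'" by blast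
  have m'0: "m' > 0" using m' m0 by (auto intro: gr0I)
  have nd: "\<not> p dvd m'"
  proof
    assume "p dvd m'"
    hence "p * p dvd m" using m' by simp
    thus False using sq p unfolding squarefree_def by (metis power2_eq_square not_prime_unit)
  qed
  have sq': "squarefree m'" using sq m' squarefree_multD(2) by blast
  have fin: "finite {t. t dvd m'}" using m'0 by simp
  have disj: "{t. t dvd m'} \<inter> (\<lambda>t. p * t) ` {t. t dvd m'} = {}"
    using nd by (auto dest: dvd_mult_left)
  have inj: "inj_on (\<lambda>t. p * t) {t. t dvd m'}" using p by (auto simp: inj_on_def prime_gt_0_nat)
  have "(\<Sum>t\<in>{t. t dvd m}. real_of_int (moebius_mu t))
      = (\<Sum>t\<in>{t. t dvd m'}. real_of_int (moebius_mu t)) + (\<Sum>t\<in>(\<lambda>t. p * t) ` {t. t dvd m'}. real_of_int (moebius_mu t))"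
    unfolding m' divisors_prime_mult[OF p(1) nd] by (rule sum.union_disjoint) (use fin disj in auto)
  also have "(\<Sum>t\<in>(\<lambda>t. p * t) ` {t. t dvd m'}. real_of_int (moebius_mu t)) = (\<Sum>t\<in>{t. t dvd m'}. real_of_int (moebius_mu (p * t)))"
    using sum.reindex[OF inj] by simp
  also have "\<dots> = (\<Sum>t\<in>{t. t dvd m'}. - real_of_int (moebius_mu t))"
  proof (rule sum.cong)
    fix t assume t: "t \<in> {t. t dvd m'}"
    hence "squarefree t" "t > 0" "\<not> p dvd t" using sq' m'0 nd squarefree_mono[of t m'] 
      by (auto intro: gr0I dest: dvd_trans)
    thus "real_of_int (moebius_mu (p * t)) = - real_of_int (moebius_mu t)" using mu_prime_mult[OF p(1)] by simp
  qed simp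
  finally show ?thesis using False by (simp add: sum_negf)
qed

lemma sum_divisors_flip:
  fixes m :: nat and g :: "nat \<Rightarrow> real"
  assumes "m > 0"
  shows "(\<Sum>s\<in>{s. s dvd m}. g (m div s)) = (\<Sum>t\<in>{t. t dvd m}. g t)"
  by (rule sum.reindex_bij_witness[of _ "\<lambda>t. m div t" "\<lambda>t. m div t"])
     (use assms in \<open>auto elim!: dvdE simp: div_mult_self1_is_m\<close>)

locale sieveD =
  fixes D :: "nat set"
  assumes finD: "finite D" and oneD: "1 \<in> D" and zD: "0 \<notin> D"
    and closed: "\<And>d e. d \<in> D \<Longrightarrow> e dvd d \<Longrightarrow> e \<in> D"
    and sqD: "\<And>d. d \<in> D \<Longrightarrow> squarefree d"
begin

definition G where "G = (\<Sum>d\<in>D. 1 / real (totient d))"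
definition Hs where "Hs = (\<Sum>d\<in>D. real (divisor_sigma d) / real (totient d))"
definition yy where "yy e = real_of_int (moebius_mu e) / (real (totient e) * G)"
definition lam where "lam d = real d * (\<Sum>e\<in>D. if d dvd e then real_of_int (moebius_mu (e div d)) * yy e else 0)"

lemma pos: "d \<in> D \<Longrightarrow> d > 0" using zD by (auto intro: gr0I)

lemma tot_pos: "d \<in> D \<Longrightarrow> real (totient d) > 0" using pos by simp

lemma G_ge1: "G \<ge> 1"
proof -
  have "1 / real (totient 1) \<le> G" unfolding G_def
    by (rule member_le_sum) (use oneD finD in auto)
  thus ?thesis by simp
qed

lemma G_pos: "G > 0" using G_ge1 by simp

lemma lam_1: "lam 1 = 1"
proof -
  have "lam 1 = (\<Sum>e\<in>D. real_of_int (moebius_mu e) * yy e)" unfolding lam_def by simp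
  also have "\<dots> = (\<Sum>e\<in>D. 1 / real (totient e) / G)"
  proof (rule sum.cong)
    fix e assume e: "e \<in> D"
    have "real_of_int (moebius_mu e) * real_of_int (moebius_mu e) = 1"
      using mu_sq[OF sqD[OF e]] by (simp add: power2_eq_square)
    thus "real_of_int (moebius_mu e) * yy e = 1 / real (totient e) / G"
      unfolding yy_def by (simp add: field_simps)
  qed simp
  also have "\<dots> = G / G" unfolding G_def by (rule sum_divide_distrib[symmetric])
  finally show ?thesis using G_pos by simp
qed

lemma inner_mu:
  assumes e: "e \<in> D" and e': "e' \<in> D"
  shows "(\<Sum>d\<in>D. if e dvd d \<and> d dvd e' then real_of_int (moebius_mu (e' div d)) else 0) = (if e = e' then 1 else 0)"
proof -
  have "(\<Sum>d\<in>D. if e dvd d \<and> d dvd e' then real_of_int (moebius_mu (e' div d)) else 0)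
      = (\<Sum>d\<in>{d\<in>D. e dvd d \<and> d dvd e'}. real_of_int (moebius_mu (e' div d)))"
    using finD by (simp add: sum.inter_filter)
  also have "\<dots> = (if e = e' then 1 else 0)"
  proof (cases "e dvd e'")
    case False
    hence em: "{d\<in>D. e dvd d \<and> d dvd e'} = {}" by (auto dest: dvd_trans)
    have "e \<noteq> e'" using False by auto
    then show ?thesis unfolding em by simp
  next
    case True
    then obtain m where m: "e' = e * m" by blast
    have e0: "e > 0" using pos e by simp
    have m0: "m > 0" using pos[OF e'] m by (auto intro: gr0I)
    have sqm: "squarefree m" using sqD[OF e'] m squarefree_multD(2) by blast
    have set: "{d\<in>D. e dvd d \<and> d dvd e'} = (\<lambda>s. e * s) ` {s. s dvd m}"
    proof safe
      fix d assume d: "d \<in> D" "e dvd d" "d dvd e'"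
      then obtain s where s: "d = e * s" by blast
      hence "s dvd m" using d(3) m e0 by simp
      thus "d \<in> (\<lambda>s. e * s) ` {s. s dvd m}" using s by blast
    next
      fix s assume "s dvd m"
      thus "e * s \<in> D" using closed[OF e'] m by simp
    qed (use m in auto)
    have inj: "inj_on (\<lambda>s. e * s) {s. s dvd m}" using e0 by (auto simp: inj_on_def)
    have "(\<Sum>d\<in>{d\<in>D. e dvd d \<and> d dvd e'}. real_of_int (moebius_mu (e' div d)))
        = (\<Sum>s\<in>{s. s dvd m}. real_of_int (moebius_mu (e' div (e * s))))"
      unfolding set using sum.reindex[OF inj] by simp
    also have "\<dots> = (\<Sum>s\<in>{s. s dvd m}. real_of_int (moebius_mu (m div s)))"
      using e0 m by simp
    also have "\<dots> = (\<Sum>t\<in>{t. t dvd m}. real_of_int (moebius_mu t))"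
      by (rule sum_divisors_flip[OF m0])
    also have "\<dots> = (if m = 1 then 1 else 0)" by (rule mu_sum[OF sqm m0])
    also have "(m = 1) = (e = e')" using m e0 by auto
    finally show ?thesis .
  qed
  finally show ?thesis .
qed

lemma F1:
  assumes e: "e \<in> D"
  shows "(\<Sum>d\<in>D. if e dvd d then lam d / real d else 0) = yy e"
proof -
  have "(\<Sum>d\<in>D. if e dvd d then lam d / real d else 0)
      = (\<Sum>d\<in>D. \<Sum>e'\<in>D. yy e' * (if e dvd d \<and> d dvd e' then real_of_int (moebius_mu (e' div d)) else 0))"
  proof (rule sum.cong)
    fix d assume d: "d \<in> D"
    have "real d > 0" using pos[OF d] by simp
    hence "lam d / real d = (\<Sum>e'\<in>D. if d dvd e' then real_of_int (moebius_mu (e' div d)) * yy e' else 0)"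
      unfolding lam_def by simp
    thus "(if e dvd d then lam d / real d else 0) = (\<Sum>e'\<in>D. yy e' * (if e dvd d \<and> d dvd e' then real_of_int (moebius_mu (e' div d)) else 0))"
      by (auto intro!: sum.cong simp: mult.commute)
  qed simp
  also have "\<dots> = (\<Sum>e'\<in>D. \<Sum>d\<in>D. yy e' * (if e dvd d \<and> d dvd e' then real_of_int (moebius_mu (e' div d)) else 0))"
    by (rule sum.swap)
  also have "\<dots> = (\<Sum>e'\<in>D. yy e' * (if e = e' then 1 else 0))"
    by (rule sum.cong) (auto simp: sum_distrib_left[symmetric] inner_mu[OF e])
  also have "\<dots> = yy e" using e finD by (simp add: if_distrib cong: if_cong)
  finally show ?thesis .
qed

lemma gcd_sum:
  assumes d1: "d1 \<in> D" and d2: "d2 \<in> D"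
  shows "real (gcd d1 d2) = (\<Sum>e\<in>D. if e dvd d1 \<and> e dvd d2 then real (totient e) else 0)"
proof -
  have "{e. e dvd gcd d1 d2} = {e\<in>D. e dvd d1 \<and> e dvd d2}" using closed[OF d1] by auto
  hence "real (gcd d1 d2) = (\<Sum>e\<in>{e\<in>D. e dvd d1 \<and> e dvd d2}. real (totient e))"
    using totient_divisor_sum[of "gcd d1 d2"] by (metis of_nat_sum)
  also have "\<dots> = (\<Sum>e\<in>D. if e dvd d1 \<and> e dvd d2 then real (totient e) else 0)"
    using finD by (simp add: sum.inter_filter)
  finally show ?thesis .
qed

lemma quad: "(\<Sum>d1\<in>D. \<Sum>d2\<in>D. lam d1 * lam d2 / real (lcm d1 d2)) = 1 / G"
proof -
  define a where "a e d = (if e dvd d then lam d / real d else 0)" for e d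
  have "(\<Sum>d1\<in>D. \<Sum>d2\<in>D. lam d1 * lam d2 / real (lcm d1 d2))
      = (\<Sum>d1\<in>D. \<Sum>d2\<in>D. \<Sum>e\<in>D. real (totient e) * (a e d1 * a e d2))"
  proof (intro sum.cong refl)
    fix d1 d2 assume d1: "d1 \<in> D" and d2: "d2 \<in> D"
    have p1: "real d1 > 0" and p2: "real d2 > 0" using pos d1 d2 by auto
    have "real d1 * real d2 = real (gcd d1 d2) * real (lcm d1 d2)"
      by (metis of_nat_mult prod_gcd_lcm_nat)
    hence "lam d1 * lam d2 / real (lcm d1 d2) = (lam d1 / real d1) * (lam d2 / real d2) * real (gcd d1 d2)"
      using p1 p2 by (simp add: field_simps)
    also have "\<dots> = (\<Sum>e\<in>D. real (totient e) * (a e d1 * a e d2))"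
      unfolding gcd_sum[OF d1 d2] sum_distrib_left a_def by (intro sum.cong refl) auto
    finally show "lam d1 * lam d2 / real (lcm d1 d2) = (\<Sum>e\<in>D. real (totient e) * (a e d1 * a e d2))" .
  qed
  also have "\<dots> = (\<Sum>d1\<in>D. \<Sum>e\<in>D. \<Sum>d2\<in>D. real (totient e) * (a e d1 * a e d2))"
    by (intro sum.cong refl sum.swap)
  also have "\<dots> = (\<Sum>e\<in>D. \<Sum>d1\<in>D. \<Sum>d2\<in>D. real (totient e) * (a e d1 * a e d2))"
    by (rule sum.swap)
  also have "\<dots> = (\<Sum>e\<in>D. real (totient e) * ((\<Sum>d1\<in>D. a e d1) * (\<Sum>d2\<in>D. a e d2)))"
    unfolding sum_product unfolding sum_distrib_left ..
  also have "\<dots> = (\<Sum>e\<in>D. real (totient e) * (yy e * yy e))"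
    using F1 unfolding a_def by simp
  also have "\<dots> = (\<Sum>e\<in>D. 1 / real (totient e) / G / G)"
  proof (rule sum.cong)
    fix e assume e: "e \<in> D"
    have "real_of_int (moebius_mu e) * real_of_int (moebius_mu e) = 1"
      using mu_sq[OF sqD[OF e]] by (simp add: power2_eq_square)
    thus "real (totient e) * (yy e * yy e) = 1 / real (totient e) / G / G"
      unfolding yy_def using tot_pos[OF e] G_pos by (simp add: field_simps)
  qed simp
  also have "\<dots> = G / G / G" unfolding G_def by (simp only: sum_divide_distrib)
  finally show ?thesis using G_pos by simp
qed

lemma lam_abs: "(\<Sum>d\<in>D. \<bar>lam d\<bar>) \<le> Hs / G"
proof -
  have ay: "\<bar>yy e\<bar> = 1 / real (totient e) / G" if e: "e \<in> D" for e
    using mu_abs1[OF sqD[OF e]] tot_pos[OF e] G_pos unfolding yy_def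
    by (simp add: abs_mult abs_div)
  have "(\<Sum>d\<in>D. \<bar>lam d\<bar>) \<le> (\<Sum>d\<in>D. \<Sum>e\<in>D. if d dvd e then real d * \<bar>yy e\<bar> else 0)"
  proof (rule sum_mono)
    fix d assume d: "d \<in> D"
    have "\<bar>lam d\<bar> = real d * \<bar>\<Sum>e\<in>D. if d dvd e then real_of_int (moebius_mu (e div d)) * yy e else 0\<bar>"
      unfolding lam_def by (simp add: abs_mult)
    also have "\<dots> \<le> real d * (\<Sum>e\<in>D. \<bar>if d dvd e then real_of_int (moebius_mu (e div d)) * yy e else 0\<bar>)"
      by (intro mult_left_mono sum_abs) auto
    also have "\<dots> \<le> real d * (\<Sum>e\<in>D. if d dvd e then \<bar>yy e\<bar> else 0)"
    proof (intro mult_left_mono sum_mono)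
      fix e
      have "\<bar>real_of_int (moebius_mu (e div d))\<bar> * \<bar>yy e\<bar> \<le> 1 * \<bar>yy e\<bar>"
        by (rule mult_right_mono[OF mu_abs]) simp
      thus "\<bar>if d dvd e then real_of_int (moebius_mu (e div d)) * yy e else 0\<bar> \<le> (if d dvd e then \<bar>yy e\<bar> else 0)"
        by (simp add: abs_mult)
    qed simp
    also have "\<dots> = (\<Sum>e\<in>D. if d dvd e then real d * \<bar>yy e\<bar> else 0)"
      unfolding sum_distrib_left by (intro sum.cong refl) simp
    finally show "\<bar>lam d\<bar> \<le> (\<Sum>e\<in>D. if d dvd e then real d * \<bar>yy e\<bar> else 0)" .
  qed
  also have "\<dots> = (\<Sum>e\<in>D. \<Sum>d\<in>D. if d dvd e then real d * \<bar>yy e\<bar> else 0)" by (rule sum.swap)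
  also have "\<dots> = (\<Sum>e\<in>D. real (divisor_sigma e) / real (totient e) / G)"
  proof (rule sum.cong)
    fix e assume e: "e \<in> D"
    have st: "{d. d dvd e} = {d\<in>D. d dvd e}" using closed[OF e] by auto
    have "real (divisor_sigma e) = (\<Sum>d\<in>{d. d dvd e}. real d)"
      unfolding divisor_sigma_def by (rule of_nat_sum)
    also have "\<dots> = (\<Sum>d\<in>{d\<in>D. d dvd e}. real d)" unfolding st ..
    also have "\<dots> = (\<Sum>d\<in>D. if d dvd e then real d else 0)" using finD by (rule sum.inter_filter)
    finally have sig: "real (divisor_sigma e) = (\<Sum>d\<in>D. if d dvd e then real d else 0)" .
    have "(\<Sum>d\<in>D. if d dvd e then real d * \<bar>yy e\<bar> else 0) = (\<Sum>d\<in>D. if d dvd e then real d else 0) * \<bar>yy e\<bar>"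
      unfolding sum_distrib_right by (intro sum.cong refl) simp
    hence "(\<Sum>d\<in>D. if d dvd e then real d * \<bar>yy e\<bar> else 0) = real (divisor_sigma e) * \<bar>yy e\<bar>"
      unfolding sig .
    thus "(\<Sum>d\<in>D. if d dvd e then real d * \<bar>yy e\<bar> else 0) = real (divisor_sigma e) / real (totient e) / G"
      using ay[OF e] by simp
  qed simp
  also have "\<dots> = Hs / G" unfolding Hs_def by (simp add: sum_divide_distrib)
  finally show ?thesis .
qed

end


definition Pset :: "real \<Rightarrow> nat \<Rightarrow> nat set" where
  "Pset z k = {p::nat. prime p \<and> real p \<le> z \<and> \<not> p dvd k}"

lemma Pset_finite: "finite (Pset z k)"
proof -
  have "Pset z k \<subseteq> {..nat \<lceil>z\<rceil>}" unfolding Pset_def by (auto simp: le_nat_iff le_ceiling_iff)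
  thus ?thesis by (rule finite_subset) simp
qed

lemma Pzk_eq: "Pzk z k = \<Prod>(Pset z k)" unfolding Pzk_def Pset_def by simp

lemma Pzk_pos: "Pzk z k > 0"
  unfolding Pzk_eq by (rule prod_pos) (simp add: Pset_def prime_gt_0_nat)

lemma sq_prod_primes:
  fixes S :: "nat set"
  assumes "finite S" "\<forall>p\<in>S. prime p"
  shows "squarefree (\<Prod>S)"
  using assms
proof (induction S rule: finite_induct)
  case empty then show ?case by simp
next
  case (insert p S)
  have p: "prime p" using insert by simp
  have nd: "\<not> p dvd \<Prod>S"
  proof
    assume "p dvd \<Prod>S"
    then obtain q where "q \<in> S" "p dvd q" using prime_dvd_prod_iff[OF insert(1) p] by auto
    moreover have "prime q" using insert \<open>q \<in> S\<close> by simp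
    ultimately have "p = q" using primes_dvd_imp_eq[OF p] by blast
    thus False using insert \<open>q \<in> S\<close> by simp
  qed
  have "squarefree (p * \<Prod>S)"
    by (rule squarefree_mult_coprime[OF prime_imp_coprime[OF p nd] squarefree_prime[OF p]]) (use insert in simp)
  thus ?case using insert by simp
qed

lemma Pzk_sq: "squarefree (Pzk z k)"
  unfolding Pzk_eq by (rule sq_prod_primes[OF Pset_finite]) (auto simp: Pset_def)

lemma Pzk_coprime: "coprime (Pzk z k) k"
  unfolding Pzk_eq by (rule prod_coprime_left) (simp add: Pset_def prime_imp_coprime)

definition Dset :: "real \<Rightarrow> nat \<Rightarrow> nat set" where
  "Dset z k = {d. d dvd Pzk z k \<and> real d \<le> z}"

lemma Dset_sieve: assumes "1 \<le> z" shows "sieveD (Dset z k)"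
proof
  show "finite (Dset z k)" unfolding Dset_def using Pzk_pos[of z k] by (auto intro: finite_subset[of _ "{d. d dvd Pzk z k}"])
  show "1 \<in> Dset z k" using assms unfolding Dset_def by simp
  show "0 \<notin> Dset z k" using Pzk_pos[of z k] unfolding Dset_def by auto
  show "e \<in> Dset z k" if "d \<in> Dset z k" "e dvd d" for d e
  proof -
    have "d > 0" using that Pzk_pos[of z k] unfolding Dset_def by (auto intro: gr0I)
    hence "e \<le> d" using that(2) by (rule dvd_imp_le[rotated])
    moreover have "e dvd Pzk z k" using that unfolding Dset_def using dvd_trans[OF that(2)] by blast
    ultimately show ?thesis using that unfolding Dset_def by auto
  qed
  show "squarefree d" if "d \<in> Dset z k" for d
    using that Pzk_sq[of z k] unfolding Dset_def by (auto intro: squarefree_mono)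
qed

lemma sqf_prod: 
  fixes n :: nat assumes "squarefree n" "n > 0"
  shows "n = \<Prod>(prime_factors n)"
proof -
  have "(\<Prod>p \<in> prime_factors n. p ^ multiplicity p n) = n" using prod_prime_factors[of n] assms by simp
  moreover have "\<forall>p\<in>prime_factors n. multiplicity p n = 1"
    using squarefree_factorial_semiring'[of n] assms by simp
  ultimately show ?thesis by simp
qed

lemma Dset_eq: "{n. 1 \<le> n \<and> real n \<le> z \<and> coprime n k \<and> squarefree n} = Dset z k"
proof safe
  fix n :: nat assume n: "1 \<le> n" "real n \<le> z" "coprime n k" "squarefree n"
  have "prime_factors n \<subseteq> Pset z k"
  proof
    fix p assume p: "p \<in> prime_factors n"
    hence pp: "prime p" "p dvd n" by (auto simp: in_prime_factors_iff)
    hence "p \<le> n" using n by (auto intro: dvd_imp_le)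
    moreover have "\<not> p dvd k"
    proof
      assume "p dvd k"
      hence "is_unit p" using coprime_common_divisor[OF n(3) pp(2)] by blast
      thus False using pp by simp
    qed
    ultimately show "p \<in> Pset z k" using pp n unfolding Pset_def by auto
  qed
  hence "\<Prod>(prime_factors n) dvd Pzk z k" unfolding Pzk_eq by (rule prod_dvd_prod_subset[OF Pset_finite])
  hence "n dvd Pzk z k" using sqf_prod[OF n(4)] n by simp
  thus "n \<in> Dset z k" using n unfolding Dset_def by simp
next
  fix n assume n: "n \<in> Dset z k"
  show "1 \<le> n" using n Pzk_pos[of z k] unfolding Dset_def by (auto intro: gr0I simp: Suc_le_eq)
  show "real n \<le> z" using n unfolding Dset_def by simp
  show "coprime n k"
  proof -
    obtain m where "Pzk z k = n * m" using n unfolding Dset_def by blast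
    thus ?thesis using Pzk_coprime[of z k] by simp
  qed
  show "squarefree n" using n Pzk_sq[of z k] unfolding Dset_def by (auto intro: squarefree_mono)
qed

lemma S_k_eq: assumes "1 \<le> z" shows "S_k k z = sieveD.G (Dset z k)"
proof -
  interpret sieveD "Dset z k" by (rule Dset_sieve[OF assms])
  define Ss where "Ss = {n::nat. 1 \<le> n \<and> real n \<le> z \<and> coprime n k}"
  have fin: "finite Ss"
  proof -
    have "Ss \<subseteq> {..nat \<lceil>z\<rceil>}" unfolding Ss_def by (auto simp: le_nat_iff le_ceiling_iff)
    thus ?thesis by (rule finite_subset) simp
  qed
  have sub: "Dset z k \<subseteq> Ss" using Dset_eq[of z k] unfolding Ss_def by blast
  have "S_k k z = (\<Sum>n\<in>Ss. real_of_int (moebius_mu n) ^ 2 / real (totient n))" unfolding S_k_def Ss_def ..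
  also have "\<dots> = (\<Sum>n\<in>Dset z k. real_of_int (moebius_mu n) ^ 2 / real (totient n))"
  proof (rule sum.mono_neutral_right[OF fin sub])
    show "\<forall>i\<in>Ss - Dset z k. real_of_int (moebius_mu i) ^ 2 / real (totient i) = 0"
    proof
      fix i assume i: "i \<in> Ss - Dset z k"
      have "\<not> squarefree i"
      proof
        assume "squarefree i"
        hence "i \<in> {n. 1 \<le> n \<and> real n \<le> z \<and> coprime n k \<and> squarefree n}" using i unfolding Ss_def by blast
        thus False using i Dset_eq[of z k] by blast
      qed
      thus "real_of_int (moebius_mu i) ^ 2 / real (totient i) = 0" by (simp add: mu_nsq)
    qed
  qed
  also have "\<dots> = G" unfolding G_def by (intro sum.cong refl) (use mu_sq sqD in simp)
  finally show ?thesis .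
qed

lemma H_k_eq: assumes "1 \<le> z" shows "H_k k z = sieveD.Hs (Dset z k)"
proof -
  interpret sieveD "Dset z k" by (rule Dset_sieve[OF assms])
  define Ss where "Ss = {n::nat. 1 \<le> n \<and> real n \<le> z \<and> coprime n k}"
  have fin: "finite Ss"
  proof -
    have "Ss \<subseteq> {..nat \<lceil>z\<rceil>}" unfolding Ss_def by (auto simp: le_nat_iff le_ceiling_iff)
    thus ?thesis by (rule finite_subset) simp
  qed
  have sub: "Dset z k \<subseteq> Ss" using Dset_eq[of z k] unfolding Ss_def by blast
  have "H_k k z = (\<Sum>n\<in>Ss. real_of_int (moebius_mu n) ^ 2 * real (divisor_sigma n) / real (totient n))" unfolding H_k_def Ss_def ..
  also have "\<dots> = (\<Sum>n\<in>Dset z k. real_of_int (moebius_mu n) ^ 2 * real (divisor_sigma n) / real (totient n))"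
  proof (rule sum.mono_neutral_right[OF fin sub])
    show "\<forall>i\<in>Ss - Dset z k. real_of_int (moebius_mu i) ^ 2 * real (divisor_sigma i) / real (totient i) = 0"
    proof
      fix i assume i: "i \<in> Ss - Dset z k"
      have "\<not> squarefree i"
      proof
        assume "squarefree i"
        hence "i \<in> {n. 1 \<le> n \<and> real n \<le> z \<and> coprime n k \<and> squarefree n}" using i unfolding Ss_def by blast
        thus False using i Dset_eq[of z k] by blast
      qed
      thus "real_of_int (moebius_mu i) ^ 2 * real (divisor_sigma i) / real (totient i) = 0" by (simp add: mu_nsq)
    qed
  qed
  also have "\<dots> = Hs" unfolding Hs_def by (intro sum.cong refl) (use mu_sq sqD in simp)
  finally show ?thesis .
qed


lemma AP_lcm:
  fixes L k :: nat and l :: int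
  assumes cop: "coprime L k"
  shows "\<exists>a. \<forall>n::int. ([n = l] (mod int k) \<and> int L dvd n) \<longleftrightarrow> [n = a] (mod int k * int L)"
proof -
  have copi: "coprime (int L) (int k)" using cop by simp
  obtain v where v: "[int L * v = 1] (mod int k)" using cong_solve_coprime_int[OF copi] by blast
  define a where "a = int L * v * l"
  have al: "[a = l] (mod int k)"
  proof -
    have "[int L * v * l = 1 * l] (mod int k)" by (rule cong_mult[OF v cong_refl])
    thus ?thesis unfolding a_def by simp
  qed
  have La: "int L dvd a" unfolding a_def by simp
  have copk: "coprime (int k) (int L)" using copi by (simp add: coprime_commute)
  show ?thesis
  proof (intro exI allI iffI)
    fix n :: int assume n: "[n = l] (mod int k) \<and> int L dvd n"
    have 1: "[n = a] (mod int k)" using n al by (meson cong_sym cong_trans)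
    have "int L dvd n - a" using n La by simp
    hence 2: "[n = a] (mod int L)" by (simp add: cong_iff_dvd_diff)
    show "[n = a] (mod int k * int L)" by (rule coprime_cong_mult[OF 1 2 copk])
  next
    fix n :: int assume n: "[n = a] (mod int k * int L)"
    have 1: "[n = a] (mod int k)" using n by (rule cong_modulus_mult)
    have "[n = a] (mod int L * int k)" using n by (simp add: mult.commute)
    hence "[n = a] (mod int L)" by (rule cong_modulus_mult)
    hence "int L dvd n - a" by (simp add: cong_iff_dvd_diff)
    hence "int L dvd n" using La by (metis dvd_add diff_add_cancel)
    thus "[n = l] (mod int k) \<and> int L dvd n" using 1 al by (meson cong_trans)
  qed
qed

theorem proposition3p2:
  fixes x y z :: real and k :: nat and l :: int and f f' :: "real \<Rightarrow> real"
  assumes "0 \<le> x" and "0 < y" and "1 \<le> k" and "1 \<le> z"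
    and "W11 {x..x+y} f f'"
    and "\<forall>t\<in>{x..x+y}. 0 \<le> f t"
  shows "(\<Sum>n\<in>{n::int. x \<le> real_of_int n \<and> real_of_int n \<le> x + y \<and> [n = l] (mod int k)
              \<and> coprime n (int (Pzk z k))}. f (real_of_int n))
         \<le> L1_norm {x..x+y} f / (real k * S_k k z)
           + (sup_norm {x..x+y} f + L1_norm {x..x+y} f') * (H_k k z)\<^sup>2 / (S_k k z)\<^sup>2"
proof -
  define D where "D = Dset z k"
  interpret sieveD D unfolding D_def by (rule Dset_sieve[OF assms(4)])
  define P where "P = Pzk z k"
  have W: "W11 {x..x+y} f f'" by (rule assms(5))
  define E where "E = sup_norm {x..x+y} f + L1_norm {x..x+y} f'"
  define M where "M = integral {x..x+y} f"
  have xy: "x < x + y" using assms by simp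
  have AP: "\<bar>(\<Sum>n\<in>APset x (x+y) a q. f (real_of_int n)) - M / q\<bar> \<le> E" if "q \<ge> 1" for a q :: int
    using ap_W11[OF W xy that] unfolding M_def E_def .
  have E0: "0 \<le> E" using AP[of 1 0] abs_ge_zero order_trans by (metis order_refl)
  define Aset where "Aset = APset x (x+y) l (int k)"
  have finA: "finite Aset" unfolding Aset_def by (rule APset_finite)
  have fnn: "0 \<le> f (real_of_int n)" if "n \<in> Aset" for n
    using that assms(6) unfolding Aset_def APset_def by auto
  have DP: "d dvd P" if "d \<in> D" for d using that unfolding D_def Dset_def P_def by simp
  define Lam where "Lam n = (\<Sum>d\<in>D. if int d dvd n then lam d else 0)" for n :: int
  have Lam1: "Lam n = 1" if cop: "coprime n (int P)" for n
  proof -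
    have "Lam n = (\<Sum>d\<in>D. if d = 1 then lam d else 0)" unfolding Lam_def
    proof (rule sum.cong)
      fix d assume d: "d \<in> D"
      have "(int d dvd n) = (d = 1)"
      proof
        assume "int d dvd n"
        moreover have "int d dvd int P" using DP[OF d] by simp
        ultimately have "is_unit (int d)" using coprime_common_divisor[OF cop] by blast
        thus "d = 1" by simp
      qed simp
      thus "(if int d dvd n then lam d else 0) = (if d = 1 then lam d else 0)" by simp
    qed simp
    also have "\<dots> = lam 1" using finD oneD by (simp add: sum.delta)
    finally show ?thesis using lam_1 by simp
  qed
  define LHS where "LHS = (\<Sum>n\<in>{n::int. x \<le> real_of_int n \<and> real_of_int n \<le> x + y \<and> [n = l] (mod int k)
              \<and> coprime n (int (Pzk z k))}. f (real_of_int n))"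
  have set_eq: "{n::int. x \<le> real_of_int n \<and> real_of_int n \<le> x + y \<and> [n = l] (mod int k)
              \<and> coprime n (int (Pzk z k))} = {n\<in>Aset. coprime n (int P)}"
    unfolding Aset_def APset_def P_def by auto
  have step1: "LHS \<le> (\<Sum>n\<in>Aset. f (real_of_int n) * (Lam n)^2)"
  proof -
    have "LHS = (\<Sum>n\<in>{n\<in>Aset. coprime n (int P)}. f (real_of_int n) * (Lam n)^2)"
      unfolding LHS_def set_eq by (rule sum.cong) (auto simp: Lam1)
    also have "\<dots> \<le> (\<Sum>n\<in>Aset. f (real_of_int n) * (Lam n)^2)"
      by (rule sum_mono2[OF finA]) (auto intro!: mult_nonneg_nonneg fnn)
    finally show ?thesis .
  qed
  define T where "T d1 d2 = (\<Sum>n\<in>Aset. if int (lcm d1 d2) dvd n then f (real_of_int n) else 0)" for d1 d2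
  have lcmdvd: "(int (lcm d1 d2) dvd n) = (int d1 dvd n \<and> int d2 dvd n)" for d1 d2 :: nat and n :: int
    by (metis lcm_int_int_eq lcm_least_iff)
  have step2: "(\<Sum>n\<in>Aset. f (real_of_int n) * (Lam n)^2) = (\<Sum>d1\<in>D. \<Sum>d2\<in>D. lam d1 * lam d2 * T d1 d2)"
  proof -
    have "(\<Sum>n\<in>Aset. f (real_of_int n) * (Lam n)^2)
        = (\<Sum>n\<in>Aset. \<Sum>d1\<in>D. \<Sum>d2\<in>D. lam d1 * lam d2 * (if int (lcm d1 d2) dvd n then f (real_of_int n) else 0))"
    proof (rule sum.cong[OF refl])
      fix n
      have "f (real_of_int n) * (Lam n)^2 = (\<Sum>d1\<in>D. \<Sum>d2\<in>D. f (real_of_int n) * ((if int d1 dvd n then lam d1 else 0) * (if int d2 dvd n then lam d2 else 0)))"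
        unfolding power2_eq_square Lam_def unfolding sum_product unfolding sum_distrib_left ..
      also have "\<dots> = (\<Sum>d1\<in>D. \<Sum>d2\<in>D. lam d1 * lam d2 * (if int (lcm d1 d2) dvd n then f (real_of_int n) else 0))"
        by (intro sum.cong refl) (simp add: lcmdvd)
      finally show "f (real_of_int n) * (Lam n)^2 = (\<Sum>d1\<in>D. \<Sum>d2\<in>D. lam d1 * lam d2 * (if int (lcm d1 d2) dvd n then f (real_of_int n) else 0))" .
    qed
    also have "\<dots> = (\<Sum>d1\<in>D. \<Sum>n\<in>Aset. \<Sum>d2\<in>D. lam d1 * lam d2 * (if int (lcm d1 d2) dvd n then f (real_of_int n) else 0))"
      by (rule sum.swap)
    also have "\<dots> = (\<Sum>d1\<in>D. \<Sum>d2\<in>D. \<Sum>n\<in>Aset. lam d1 * lam d2 * (if int (lcm d1 d2) dvd n then f (real_of_int n) else 0))"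
      by (intro sum.cong refl sum.swap)
    also have "\<dots> = (\<Sum>d1\<in>D. \<Sum>d2\<in>D. lam d1 * lam d2 * T d1 d2)"
      unfolding T_def sum_distrib_left ..
    finally show ?thesis .
  qed
  have step3: "\<bar>T d1 d2 - M / (real k * real (lcm d1 d2))\<bar> \<le> E" if d1: "d1 \<in> D" and d2: "d2 \<in> D" for d1 d2
  proof -
    define L where "L = lcm d1 d2"
    have LP: "L dvd P" unfolding L_def using DP[OF d1] DP[OF d2] by simp
    have copL: "coprime L k"
    proof -
      obtain m where "P = L * m" using LP by blast
      thus ?thesis using Pzk_coprime[of z k] unfolding P_def by simp
    qed
    have L0: "L > 0" unfolding L_def using pos[OF d1] pos[OF d2] by (simp add: lcm_pos_nat)
    obtain a where a: "\<And>n::int. ([n = l] (mod int k) \<and> int L dvd n) \<longleftrightarrow> [n = a] (mod int k * int L)"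
      using AP_lcm[OF copL, of l] by blast
    have "T d1 d2 = (\<Sum>n\<in>{n\<in>Aset. int L dvd n}. f (real_of_int n))"
      unfolding T_def L_def using finA by (simp add: sum.inter_filter)
    also have "{n\<in>Aset. int L dvd n} = APset x (x+y) a (int k * int L)"
      unfolding Aset_def APset_def using a by auto
    finally have TT: "T d1 d2 = (\<Sum>n\<in>APset x (x+y) a (int k * int L). f (real_of_int n))" .
    have q1: "int k * int L \<ge> 1" using assms(3) L0
      by (metis dual_order.trans mult_le_mono1 mult_numeral_1 numeral_One of_nat_1 of_nat_le_iff of_nat_mult less_one not_le)
    have "\<bar>T d1 d2 - M / real_of_int (int k * int L)\<bar> \<le> E" unfolding TT by (rule AP[OF q1])
    thus ?thesis unfolding L_def by simp
  qed
  define R where "R d1 d2 = T d1 d2 - M / (real k * real (lcm d1 d2))" for d1 d2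
  have step4: "(\<Sum>d1\<in>D. \<Sum>d2\<in>D. lam d1 * lam d2 * T d1 d2) \<le> M / real k * (1 / G) + (Hs / G)^2 * E"
  proof -
    have "(\<Sum>d1\<in>D. \<Sum>d2\<in>D. lam d1 * lam d2 * T d1 d2)
        = (\<Sum>d1\<in>D. \<Sum>d2\<in>D. M / real k * (lam d1 * lam d2 / real (lcm d1 d2)) + lam d1 * lam d2 * R d1 d2)"
      unfolding R_def by (intro sum.cong refl) (simp add: field_simps)
    also have "\<dots> = M / real k * (\<Sum>d1\<in>D. \<Sum>d2\<in>D. lam d1 * lam d2 / real (lcm d1 d2)) + (\<Sum>d1\<in>D. \<Sum>d2\<in>D. lam d1 * lam d2 * R d1 d2)"
      unfolding sum.distrib sum_distrib_left ..
    also have "(\<Sum>d1\<in>D. \<Sum>d2\<in>D. lam d1 * lam d2 / real (lcm d1 d2)) = 1 / G" by (rule quad)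
    also have "(\<Sum>d1\<in>D. \<Sum>d2\<in>D. lam d1 * lam d2 * R d1 d2) \<le> (\<Sum>d1\<in>D. \<Sum>d2\<in>D. \<bar>lam d1\<bar> * \<bar>lam d2\<bar> * E)"
    proof (intro sum_mono)
      fix d1 d2 assume d1: "d1 \<in> D" and d2: "d2 \<in> D"
      have "lam d1 * lam d2 * R d1 d2 \<le> \<bar>lam d1 * lam d2 * R d1 d2\<bar>" by simp
      also have "\<dots> = \<bar>lam d1\<bar> * \<bar>lam d2\<bar> * \<bar>R d1 d2\<bar>" by (simp add: abs_mult)
      also have "\<dots> \<le> \<bar>lam d1\<bar> * \<bar>lam d2\<bar> * E"
        by (rule mult_left_mono) (use step3[OF d1 d2] in \<open>auto simp: R_def\<close>)
      finally show "lam d1 * lam d2 * R d1 d2 \<le> \<bar>lam d1\<bar> * \<bar>lam d2\<bar> * E" .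
    qed
    also have "(\<Sum>d1\<in>D. \<Sum>d2\<in>D. \<bar>lam d1\<bar> * \<bar>lam d2\<bar> * E) = (\<Sum>d\<in>D. \<bar>lam d\<bar>)^2 * E"
      unfolding power2_eq_square unfolding sum_product unfolding sum_distrib_right ..
    also have "\<dots> \<le> (Hs / G)^2 * E"
    proof (rule mult_right_mono[OF _ E0])
      show "(\<Sum>d\<in>D. \<bar>lam d\<bar>)^2 \<le> (Hs / G)^2"
        by (rule power_mono[OF lam_abs]) (simp add: sum_nonneg)
    qed
    finally show ?thesis by simp
  qed
  have M_eq: "M = L1_norm {x..x+y} f"
    unfolding M_def L1_norm_def using assms(6) by (intro integral_cong) simp
  have G_eq: "G = S_k k z" unfolding D_def using S_k_eq[OF assms(4)] by simp
  have H_eq: "Hs = H_k k z" unfolding D_def using H_k_eq[OF assms(4)] by simp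
  have "LHS \<le> M / real k * (1 / G) + (Hs / G)^2 * E" using step1 step2 step4 by linarith
  also have "\<dots> = L1_norm {x..x+y} f / (real k * S_k k z)
           + (sup_norm {x..x+y} f + L1_norm {x..x+y} f') * (H_k k z)\<^sup>2 / (S_k k z)\<^sup>2"
    unfolding M_eq G_eq H_eq E_def by (simp add: power_divide)
  finally show ?thesis unfolding LHS_def .
qed


end
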